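(* Let $\ell$ and $m$ be integers with $2\le\ell\le m$, let $G$ be an abelian group written additively, let $\mathbf{a}=(a_1,\dots,a_m)$ be a sequence of elements of $G$, and let $A$ be the set of distinct terms of $\mathbf{a}$. Assume \[ |\Sigma^{\ell}(\mathbf{a})|<\begin{cases}p(G)-1,&\ell=2,\\ p(G),&\ell\ge3,\end{cases} \] that $\mu_{\mathbf{a}}(a)=\ell$ for some $a\in A$, that $|\{a\in A:\mu_{\mathbf{a}}(a)\ge2\}|\ge2$, and that \[ |\Sigma^{\ell}(\mathbf{a})|=\sum_{a\in A}\mu_{\mathbf{a}}(a)-\ell+1 . \] Then $A$ is an arithmetic progression.
   Context: $p(G)$ is the order of the smallest nontrivial subgroup of $G$, or $\infty$ if none exists. $\Sigma^{\ell}(\mathbf{a})$ is the set of all sums $a_{i_1}+\cdots+a_{i_\ell}$ with $1\le i_1<\cdots<i_\ell\le m$. $\rho_a(\mathbf{a})=|\{i:a_i=a\}|$, $\mu_{\mathbf{a}}(a)=\min(\ell,\rho_a(\mathbf{a}))$. An arithmetic progression is a set $\{c+jd:j\in[0,k-1]\}$ with $d\ne0$. *)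

theory Defs
  imports Main "HOL-Library.Extended_Nat"
begin

definition add_subgroup :: "'a::ab_group_add set \<Rightarrow> bool" where
  "add_subgroup H \<longleftrightarrow> 0 \<in> H \<and> (\<forall>x\<in>H. \<forall>y\<in>H. x + y \<in> H) \<and> (\<forall>x\<in>H. - x \<in> H)"

text \<open>p(G): the order of the smallest nontrivial subgroup, infinity if none (infinite subgroups have order infinity).\<close>
definition pG :: "'a::ab_group_add itself \<Rightarrow> enat" where
  "pG _ = (INF H \<in> {H::'a set. add_subgroup H \<and> H \<noteq> {0}}.
             (if finite H then enat (card H) else \<infinity>))"

definition Sigma_l :: "nat \<Rightarrow> 'a::ab_group_add list \<Rightarrow> 'a set" where
  "Sigma_l l a = {(\<Sum>i\<in>I. a ! i) | I. I \<subseteq> {..<length a} \<and> card I = l}"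

definition rho :: "'a \<Rightarrow> 'a list \<Rightarrow> nat" where
  "rho x a = card {i. i < length a \<and> a ! i = x}"

definition mu :: "nat \<Rightarrow> 'a list \<Rightarrow> 'a \<Rightarrow> nat" where
  "mu l a x = min l (rho x a)"

definition nsum :: "nat \<Rightarrow> 'a::ab_group_add \<Rightarrow> 'a" where
  "nsum j d = (\<Sum>i<j. d)"

definition arith_prog :: "'a::ab_group_add set \<Rightarrow> bool" where
  "arith_prog S \<longleftrightarrow> (\<exists>c d k. d \<noteq> 0 \<and> S = {c + nsum j d | j. j < k})"

end

theory Submission
  imports Defs
begin

definition sp :: "'a::ab_group_add set \<Rightarrow> 'a set \<Rightarrow> 'a set" where
  "sp X Y = (\<lambda>(x,y). x + y) ` (X \<times> Y)"

lemma nsum_0[simp]: "nsum 0 d = 0" by (simp add: nsum_def)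
lemma nsum_Suc: "nsum (Suc j) d = nsum j d + d" by (simp add: nsum_def)
lemma nsum_add: "nsum (i + j) d = nsum i d + nsum j d"
  by (induction j) (simp_all add: nsum_Suc add.assoc)
lemma nsum_1[simp]: "nsum 1 d = d" by (simp add: nsum_def)
lemma nsum_mult0: "nsum k d = 0 \<Longrightarrow> nsum (q * k) d = 0"
  by (induction q) (simp_all add: nsum_add)
lemma nsum_mod: "nsum k d = 0 \<Longrightarrow> nsum (j mod k) d = nsum j d"
proof -
  assume h: "nsum k d = 0"
  have "nsum j d = nsum ((j div k) * k + j mod k) d" by simp
  also have "\<dots> = nsum (j mod k) d" using nsum_mult0[OF h, of "j div k"] by (simp only: nsum_add) simp
  finally show ?thesis by simp
qed

lemma pG_le:
  assumes "add_subgroup H" "H \<noteq> {0}" "finite H"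
  shows "pG TYPE('a::ab_group_add) \<le> enat (card (H::'a set))"
proof -
  have "pG TYPE('a) \<le> (if finite H then enat (card H) else \<infinity>)"
    unfolding pG_def by (rule INF_lower) (use assms in auto)
  then show ?thesis using assms by simp
qed

lemma L1:
  fixes d :: "'a::ab_group_add"
  assumes "d \<noteq> 0" "0 < k" "nsum k d = 0"
  shows "pG TYPE('a) \<le> enat k"
proof -
  define H where "H = (\<lambda>j. nsum j d) ` {..<k}"
  have k2: "k \<noteq> 1" using assms by (auto simp: nsum_def)
  have mem: "nsum j d \<in> H" for j
  proof -
    have "nsum j d = nsum (j mod k) d" using nsum_mod[OF assms(3)] by simp
    moreover have "j mod k < k" using assms(2) by simp
    ultimately show ?thesis unfolding H_def by auto
  qed
  have sg: "add_subgroup H"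
    unfolding add_subgroup_def
  proof (intro conjI ballI)
    show "0 \<in> H" using mem[of 0] by simp
  next
    fix x y assume "x \<in> H" "y \<in> H"
    then obtain i j where "x = nsum i d" "y = nsum j d" unfolding H_def by auto
    then show "x + y \<in> H" using mem[of "i+j"] by (simp add: nsum_add)
  next
    fix x assume "x \<in> H"
    then obtain i where i: "x = nsum i d" "i < k" unfolding H_def by auto
    have "nsum (k - i) d + nsum i d = 0" using assms(3) i(2) nsum_add[of "k-i" i d] by simp
    then have "x + nsum (k - i) d = 0" using i(1) by (simp add: add.commute)
    then have "- x = nsum (k - i) d" by (simp add: neg_eq_iff_add_eq_0)
    then show "- x \<in> H" using mem by simp
  qed
  have "d \<in> H" using mem[of 1] by (metis nsum_1)
  then have ne: "H \<noteq> {0}" using assms(1) by auto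
  have fin: "finite H" unfolding H_def by simp
  have "card H \<le> k" unfolding H_def using card_image_le[of "{..<k}"] by simp
  then show ?thesis using pG_le[OF sg ne fin] by (meson enat_ord_simps(1) order_trans)
qed

lemma nsum_distinct:
  fixes d :: "'a::ab_group_add"
  assumes "d \<noteq> 0" "i < j" "enat (j - i) < pG TYPE('a)"
  shows "nsum i d \<noteq> nsum j d"
proof
  assume "nsum i d = nsum j d"
  then have "nsum (j - i) d = 0" using nsum_add[of i "j-i" d] assms(2) by simp
  then have "pG TYPE('a) \<le> enat (j - i)" using L1[of d "j-i"] assms by simp
  then show False using assms(3) by simp
qed

lemma L2:
  fixes d :: "'a::ab_group_add"
  assumes "finite X" "x \<in> X" "d \<noteq> 0" "\<And>y. y \<in> X \<Longrightarrow> y + d \<in> X"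
  shows "pG TYPE('a) \<le> enat (card X)"
proof (rule ccontr)
  assume "\<not> ?thesis"
  then have lt: "enat (card X) < pG TYPE('a)" by simp
  have inX: "x + nsum j d \<in> X" for j
  proof (induction j)
    case (Suc j) then show ?case using assms(4)[OF Suc] by (simp add: nsum_Suc add.assoc)
  qed (simp add: assms(2))
  have inj: "inj_on (\<lambda>j. x + nsum j d) {..card X}"
  proof (rule inj_onI)
    fix i j assume ij: "i \<in> {..card X}" "j \<in> {..card X}" "x + nsum i d = x + nsum j d"
    show "i = j"
    proof (rule ccontr)
      assume "i \<noteq> j"
      then consider "i < j" | "j < i" by linarith
      then show False
      proof cases
        case 1
        have "enat (j - i) < pG TYPE('a)" using lt ij(1,2) 
          by (meson atMost_iff diff_le_self enat_ord_simps(1) le_trans order_le_less_trans)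
        then show False using nsum_distinct[OF assms(3) 1] ij(3) by simp
      next
        case 2
        have "enat (i - j) < pG TYPE('a)" using lt ij(1,2) 
          by (meson atMost_iff diff_le_self enat_ord_simps(1) le_trans order_le_less_trans)
        then show False using nsum_distinct[OF assms(3) 2] ij(3) by simp
      qed
    qed
  qed
  have "(\<lambda>j. x + nsum j d) ` {..card X} \<subseteq> X" using inX by auto
  then have "card ((\<lambda>j. x + nsum j d) ` {..card X}) \<le> card X" using assms(1) card_mono by blast
  then show False using card_image[OF inj] by simp
qed

lemma sp_iff: "z \<in> sp X Y \<longleftrightarrow> (\<exists>x\<in>X. \<exists>y\<in>Y. z = x + y)"
  unfolding sp_def by auto
lemma sp_I: "x \<in> X \<Longrightarrow> y \<in> Y \<Longrightarrow> x + y \<in> sp X Y"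
  unfolding sp_def by auto
lemma sp_finite: "finite X \<Longrightarrow> finite Y \<Longrightarrow> finite (sp X Y)"
  unfolding sp_def by simp
lemma sp_mono: "X \<subseteq> X' \<Longrightarrow> Y \<subseteq> Y' \<Longrightarrow> sp X Y \<subseteq> sp X' Y'"
  unfolding sp_def by auto
lemma sp_comm: "sp X Y = sp Y X"
  unfolding set_eq_iff sp_iff by (metis add.commute)
lemma sp_single: "sp X {y} = (\<lambda>x. x + y) ` X"
  unfolding sp_def by auto
lemma sp_empty[simp]: "sp X {} = {}" "sp {} Y = {}"
  unfolding sp_def by auto
lemma sp_zero: "sp {0} X = X"
  unfolding sp_def by force

lemma card_translate: "card ((\<lambda>x. x + (c::'a::ab_group_add)) ` X) = card X"
  by (rule card_image) (simp add: inj_on_def)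

lemma card_le_sp:
  assumes "finite X" "finite Y" "y \<in> Y"
  shows "card X \<le> card (sp X Y)"
proof -
  have "(\<lambda>x. x + y) ` X \<subseteq> sp X Y" using assms(3) by (auto intro: sp_I)
  then have "card ((\<lambda>x. x + y) ` X) \<le> card (sp X Y)"
    using sp_finite[OF assms(1,2)] card_mono by blast
  then show ?thesis by (simp add: card_translate)
qed

lemma CD:
  fixes X Y :: "'a::ab_group_add set"
  assumes "finite X" "finite Y" "X \<noteq> {}" "Y \<noteq> {}"
  shows "pG TYPE('a) \<le> enat (card (sp X Y)) \<or> card X + card Y \<le> card (sp X Y) + 1"
  using assms
proof (induction "card Y" arbitrary: X Y rule: less_induct)
  case less
  note fX = less.prems(1) and fY = less.prems(2) and neX = less.prems(3) and neY = less.prems(4)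
  show ?case
  proof (cases "card Y = 1")
    case True
    then obtain y where "Y = {y}" using card_1_singletonE by blast
    then show ?thesis by (simp add: sp_single card_translate)
  next
    case False
    then have "card Y \<ge> 2" using neY fY by (metis One_nat_def Suc_1 Suc_leI card_gt_0_iff le_antisym not_less_eq_eq)
    obtain y1 where "y1 \<in> Y" using neY by auto
    moreover have "Y \<noteq> {y1}" using \<open>card Y \<ge> 2\<close> by auto
    ultimately obtain y2 where y12: "y1 \<in> Y" "y2 \<in> Y" "y1 \<noteq> y2" by blast
    show ?thesis
    proof (cases "\<forall>x\<in>X. \<forall>y\<in>Y. \<forall>y'\<in>Y. x + y - y' \<in> X")
      case True
      obtain x0 where x0: "x0 \<in> X" using neX by auto
      have "pG TYPE('a) \<le> enat (card X)"
        by (rule L2[OF fX x0, of "y1 - y2"]) (use y12 True in \<open>auto simp: add_diff_eq\<close>)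
      moreover have "card X \<le> card (sp X Y)" using card_le_sp[OF fX fY y12(1)] .
      ultimately show ?thesis by (meson enat_ord_simps(1) order_trans)
    next
      case False
      then obtain x y y' where xy: "x \<in> X" "y \<in> Y" "y' \<in> Y" "x + y - y' \<notin> X" by auto
      define e where "e = x - y'"
      define X' where "X' = X \<union> (\<lambda>v. v + e) ` Y"
      define Y' where "Y' = {v \<in> Y. v + e \<in> X}"
      have y'Y': "y' \<in> Y'" unfolding Y'_def e_def using xy by simp
      have yY': "y \<notin> Y'" unfolding Y'_def e_def using xy by (simp add: algebra_simps)
      have sub: "Y' \<subseteq> Y" unfolding Y'_def by auto
      have lt: "card Y' < card Y" using sub yY' xy(2) fY by (metis psubsetI psubset_card_mono)
      have fY': "finite Y'" using sub fY finite_subset by blast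
      have fX': "finite X'" unfolding X'_def using fX fY by simp
      have int: "X \<inter> (\<lambda>v. v + e) ` Y = (\<lambda>v. v + e) ` Y'" unfolding Y'_def by auto
      have "card X' + card (X \<inter> (\<lambda>v. v + e) ` Y) = card X + card ((\<lambda>v. v + e) ` Y)"
        unfolding X'_def using card_Un_Int[of X "(\<lambda>v. v + e) ` Y"] fX fY by simp
      then have cX': "card X' + card Y' = card X + card Y" using int by (simp add: card_translate)
      have spsub: "sp X' Y' \<subseteq> sp X Y"
      proof
        fix z assume "z \<in> sp X' Y'"
        then obtain u v where uv: "u \<in> X'" "v \<in> Y'" "z = u + v" by (auto simp: sp_iff)
        show "z \<in> sp X Y"
        proof (cases "u \<in> X")
          case True then show ?thesis using uv sub by (auto simp: sp_iff)
        next
          case False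
          then obtain w where w: "w \<in> Y" "u = w + e" using uv(1) unfolding X'_def by auto
          have "z = (v + e) + w" using uv(3) w(2) by (simp add: algebra_simps)
          moreover have "v + e \<in> X" using uv(2) unfolding Y'_def by simp
          ultimately show ?thesis using w(1) by (auto simp: sp_iff)
        qed
      qed
      have cle: "card (sp X' Y') \<le> card (sp X Y)"
        using spsub sp_finite[OF fX fY] card_mono by blast
      have "pG TYPE('a) \<le> enat (card (sp X' Y')) \<or> card X' + card Y' \<le> card (sp X' Y') + 1"
        using less.hyps[OF lt fX' fY'] neX y'Y' unfolding X'_def by auto
      then show ?thesis using cle cX'
        by (metis add_le_mono1 enat_ord_simps(1) order_trans)
    qed
  qed
qed

definition APd :: "'a::ab_group_add \<Rightarrow> 'a set \<Rightarrow> bool" where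
  "APd d X \<longleftrightarrow> (\<exists>c. X = (\<lambda>j. c + nsum j d) ` {..<card X})"

lemma inj_nsum:
  fixes d :: "'a::ab_group_add"
  assumes "d \<noteq> 0" "enat N < pG TYPE('a)"
  shows "inj_on (\<lambda>j. c + nsum j d) {..N}"
proof (rule inj_onI)
  fix i j assume ij: "i \<in> {..N}" "j \<in> {..N}" "c + nsum i d = c + nsum j d"
  show "i = j"
  proof (rule ccontr)
    assume "i \<noteq> j"
    then consider "i < j" | "j < i" by linarith
    then show False
    proof cases
      case 1
      have "enat (j - i) < pG TYPE('a)" using assms(2) ij(1,2)
        by (meson atMost_iff diff_le_self enat_ord_simps(1) le_trans order_le_less_trans)
      then show False using nsum_distinct[OF assms(1) 1] ij(3) by simp
    next
      case 2
      have "enat (i - j) < pG TYPE('a)" using assms(2) ij(1,2)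
        by (meson atMost_iff diff_le_self enat_ord_simps(1) le_trans order_le_less_trans)
      then show False using nsum_distinct[OF assms(1) 2] ij(3) by simp
    qed
  qed
qed

lemma chain:
  fixes X :: "'a::ab_group_add set"
  assumes fX: "finite X" and d0: "d \<noteq> 0" and lt: "enat (card X) < pG TYPE('a)"
    and c1: "card (X \<union> (\<lambda>x. x + d) ` X) = card X + 1"
  shows "APd d X"
proof -
  define Xd where "Xd = (\<lambda>x. x + d) ` X"
  have "card (X \<union> (Xd - X)) = card X + card (Xd - X)"
    by (rule card_Un_disjoint) (use fX in \<open>auto simp: Xd_def\<close>)
  moreover have "X \<union> (Xd - X) = X \<union> Xd" by auto
  ultimately have "card (Xd - X) = 1" using c1 unfolding Xd_def by simp
  then obtain z where z: "Xd - X = {z}" using card_1_singletonE by blast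
  then obtain x1 where x1: "x1 \<in> X" "z = x1 + d" unfolding Xd_def by auto
  have key: "w + d \<in> X" if "w \<in> X" "w \<noteq> x1" for w
  proof (rule ccontr)
    assume "w + d \<notin> X"
    then have "w + d \<in> Xd - X" using that unfolding Xd_def by auto
    then show False using z x1 that by simp
  qed
  have reach: "\<exists>j<card X. x + nsum j d = x1" if xX: "x \<in> X" for x
  proof (rule ccontr)
    assume nr: "\<not> ?thesis"
    have inX: "j \<le> card X \<Longrightarrow> x + nsum j d \<in> X" for j
    proof (induction j)
      case 0 then show ?case using xX by simp
    next
      case (Suc j)
      then have "x + nsum j d \<in> X" by simp
      moreover have "x + nsum j d \<noteq> x1" using nr Suc.prems by auto
      ultimately have "x + nsum j d + d \<in> X" using key by blast
      then show ?case by (simp add: nsum_Suc add.assoc)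
    qed
    have "(\<lambda>j. x + nsum j d) ` {..card X} \<subseteq> X" using inX by auto
    then have "card ((\<lambda>j. x + nsum j d) ` {..card X}) \<le> card X" using fX card_mono by blast
    then show False using card_image[OF inj_nsum[OF d0 lt, of x]] by simp
  qed
  define n where "n = card X"
  have n1: "n \<ge> 1" using x1 fX unfolding n_def by (metis One_nat_def Suc_leI card_gt_0_iff empty_iff)
  have sub: "X \<subseteq> (\<lambda>j. x1 - nsum j d) ` {..<n}"
  proof
    fix x assume "x \<in> X"
    then obtain j where "j < n" "x + nsum j d = x1" using reach unfolding n_def by blast
    then show "x \<in> (\<lambda>j. x1 - nsum j d) ` {..<n}"
      by (auto simp: eq_diff_eq[symmetric] intro!: image_eqI[where x=j])
  qed
  have "card ((\<lambda>j. x1 - nsum j d) ` {..<n}) \<le> n" using card_image_le[of "{..<n}"] by simp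
  then have eq: "X = (\<lambda>j. x1 - nsum j d) ` {..<n}"
    using card_seteq[OF _ sub] unfolding n_def by simp
  define c where "c = x1 - nsum (n - 1) d"
  have re: "x1 - nsum j d = c + nsum (n - 1 - j) d" if "j < n" for j
  proof -
    have "nsum (n - 1) d = nsum (n - 1 - j) d + nsum j d"
      using nsum_add[of "n - 1 - j" j d] that by simp
    then show ?thesis unfolding c_def by (simp add: algebra_simps)
  qed
  have "(\<lambda>j. x1 - nsum j d) ` {..<n} = (\<lambda>j. c + nsum j d) ` {..<n}"
  proof (intro equalityI subsetI)
    fix y assume "y \<in> (\<lambda>j. x1 - nsum j d) ` {..<n}"
    then obtain j where j: "j < n" "y = x1 - nsum j d" by auto
    then show "y \<in> (\<lambda>j. c + nsum j d) ` {..<n}"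
      using re[OF j(1)] n1 by (auto intro!: image_eqI[where x="n - 1 - j"])
  next
    fix y assume "y \<in> (\<lambda>j. c + nsum j d) ` {..<n}"
    then obtain j where j: "j < n" "y = c + nsum j d" by auto
    have "n - 1 - j < n" using n1 by simp
    moreover have "n - 1 - (n - 1 - j) = j" using j(1) by simp
    ultimately show "y \<in> (\<lambda>j. x1 - nsum j d) ` {..<n}"
      using re[of "n - 1 - j"] j by (auto intro!: image_eqI[where x="n - 1 - j"])
  qed
  then have eq2: "X = (\<lambda>j. c + nsum j d) ` {..<n}" using eq by simp
  show ?thesis unfolding APd_def n_def[symmetric] by (rule exI[of _ c]) (rule eq2)
qed

lemma chain':
  fixes X :: "'a::ab_group_add set"
  assumes fX: "finite X" and ne: "X \<noteq> {}" and d0: "d \<noteq> 0" and lt: "enat (card X) < pG TYPE('a)"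
    and c1: "card (X \<union> (\<lambda>x. x + d) ` X) \<le> card X + 1"
  shows "APd d X"
proof (rule chain[OF fX d0 lt])
  have fin: "finite (X \<union> (\<lambda>x. x + d) ` X)" using fX by simp
  have ge: "card X \<le> card (X \<union> (\<lambda>x. x + d) ` X)" by (rule card_mono[OF fin]) blast
  show "card (X \<union> (\<lambda>x. x + d) ` X) = card X + 1"
  proof (rule ccontr)
    assume "card (X \<union> (\<lambda>x. x + d) ` X) \<noteq> card X + 1"
    then have "card (X \<union> (\<lambda>x. x + d) ` X) = card X" using c1 ge by simp
    then have eqX: "X = X \<union> (\<lambda>x. x + d) ` X"
      by (intro card_seteq[OF fin]) auto
    have cl: "\<And>y. y \<in> X \<Longrightarrow> y + d \<in> X"
    proof -
      fix y assume "y \<in> X"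
      then have "y + d \<in> X \<union> (\<lambda>x. x + d) ` X" by blast
      then show "y + d \<in> X" using eqX by blast
    qed
    obtain x0 where "x0 \<in> X" using ne by auto
    then have "pG TYPE('a) \<le> enat (card X)" using L2[OF fX _ d0 cl] by blast
    then show False using lt by simp
  qed
qed

lemma APd_obtain:
  assumes "APd d X"
  obtains c where "X = (\<lambda>j. c + nsum j d) ` {..<card X}"
  using assms unfolding APd_def by blast

lemma propagate:
  fixes X Y :: "'a::ab_group_add set"
  assumes fX: "finite X" and fY: "finite Y" and neX: "X \<noteq> {}" and ap: "APd d Y"
    and k2: "card Y \<ge> 2" and tight: "card (sp X Y) + 1 = card X + card Y"
    and lt: "enat (card (sp X Y)) < pG TYPE('a)"
  shows "APd d X"
proof -
  define k where "k = card Y"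
  obtain c where Yc0: "Y = (\<lambda>j. c + nsum j d) ` {..<card Y}" by (rule APd_obtain[OF ap])
  have Yc: "Y = (\<lambda>j. c + nsum j d) ` {..<k}" unfolding k_def by (rule Yc0)
  have d0: "d \<noteq> 0"
  proof
    assume "d = 0"
    then have "Y \<subseteq> {c}" using Yc by (auto simp: nsum_def)
    then have "card Y \<le> card {c}" by (intro card_mono) auto
    then have "card Y \<le> 1" by simp
    then show False using k2 by simp
  qed
  define Y2 where "Y2 = (\<lambda>j. c + nsum j d) ` {..<k - 1}"
  have "{..<k} = insert (k - 1) {..<k - 1}" using k2 unfolding k_def by auto
  then have "Y = insert (c + nsum (k - 1) d) Y2" unfolding Yc Y2_def by auto
  have fY2: "finite Y2" unfolding Y2_def by simp
  have cY2: "k \<le> card Y2 + 1" unfolding k_def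
    using \<open>Y = insert (c + nsum (k - 1) d) Y2\<close> by (simp add: card_insert_if fY2)
  have "0 \<in> {..<k - 1}" using k2 unfolding k_def by simp
  then have neY2: "Y2 \<noteq> {}" unfolding Y2_def by blast
  define X' where "X' = X \<union> (\<lambda>x. x + d) ` X"
  have fX': "finite X'" unfolding X'_def using fX by simp
  have sub: "sp X' Y2 \<subseteq> sp X Y"
  proof
    fix z assume "z \<in> sp X' Y2"
    then obtain u v where uv: "u \<in> X'" "v \<in> Y2" "z = u + v" by (auto simp: sp_iff)
    obtain j where j: "j < k - 1" "v = c + nsum j d" using uv(2) unfolding Y2_def by auto
    show "z \<in> sp X Y"
    proof (cases "u \<in> X")
      case True
      have "v \<in> Y" using j unfolding Yc by auto
      then show ?thesis using True uv by (auto simp: sp_iff)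
    next
      case False
      then obtain x where x: "x \<in> X" "u = x + d" using uv(1) unfolding X'_def by auto
      have "z = x + (c + nsum (Suc j) d)" using uv(3) x(2) j(2) by (simp add: nsum_Suc algebra_simps)
      moreover have "c + nsum (Suc j) d \<in> Y" unfolding Yc using j(1) by auto
      ultimately show ?thesis using x(1) by (auto simp: sp_iff)
    qed
  qed
  have cle: "card (sp X' Y2) \<le> card (sp X Y)" using sub sp_finite[OF fX fY] card_mono by blast
  have "pG TYPE('a) \<le> enat (card (sp X' Y2)) \<or> card X' + card Y2 \<le> card (sp X' Y2) + 1"
    using CD[OF fX' fY2 _ neY2] neX unfolding X'_def by auto
  moreover have "\<not> pG TYPE('a) \<le> enat (card (sp X' Y2))"
    using cle lt by (meson enat_ord_simps(1) leD order_le_less_trans)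
  ultimately have "card X' + card Y2 \<le> card (sp X Y) + 1" using cle by linarith
  then have c1: "card X' \<le> card X + 1" using tight cY2 unfolding k_def by linarith
  have cX: "card X \<le> card (sp X Y)"
  proof -
    have "Y \<noteq> {}" using k2 by auto
    then obtain y where "y \<in> Y" by auto
    then show ?thesis using card_le_sp[OF fX fY] by blast
  qed
  have ltX: "enat (card X) < pG TYPE('a)" using cX lt by (meson enat_ord_simps(1) order_le_less_trans)
  show ?thesis by (rule chain'[OF fX neX d0 ltX]) (use c1 in \<open>simp add: X'_def\<close>)
qed

lemma lift:
  fixes X Y :: "'a::ab_group_add set"
  assumes fX: "finite X" and fY: "finite Y" and neX: "X \<noteq> {}" and neY: "Y \<noteq> {}"
    and ap: "APd d (sp X Y)" and d0: "d \<noteq> 0"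
    and tight: "card (sp X Y) + 1 = card X + card Y"
    and lt: "enat (card (sp X Y) + 1) < pG TYPE('a)"
  shows "APd d X"
proof -
  define s where "s = card (sp X Y)"
  obtain c where Sc0: "sp X Y = (\<lambda>j. c + nsum j d) ` {..<card (sp X Y)}" by (rule APd_obtain[OF ap])
  have Sc: "sp X Y = (\<lambda>j. c + nsum j d) ` {..<s}" unfolding s_def by (rule Sc0)
  define X' where "X' = X \<union> (\<lambda>x. x + d) ` X"
  have fX': "finite X'" unfolding X'_def using fX by simp
  have sub: "sp X' Y \<subseteq> (\<lambda>j. c + nsum j d) ` {..<s+1}"
  proof
    fix z assume "z \<in> sp X' Y"
    then obtain u v where uv: "u \<in> X'" "v \<in> Y" "z = u + v" by (auto simp: sp_iff)
    show "z \<in> (\<lambda>j. c + nsum j d) ` {..<s+1}"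
    proof (cases "u \<in> X")
      case True
      then have "z \<in> sp X Y" using uv by (auto simp: sp_iff)
      then obtain j where "j < s" "z = c + nsum j d" using Sc by auto
      then show ?thesis by auto
    next
      case False
      then obtain x where x: "x \<in> X" "u = x + d" using uv(1) unfolding X'_def by auto
      have "x + v \<in> sp X Y" using x(1) uv(2) by (auto simp: sp_iff)
      then obtain j where j: "j < s" "x + v = c + nsum j d" using Sc by auto
      have "z = c + nsum (Suc j) d" using uv(3) x(2) j(2) by (simp add: nsum_Suc algebra_simps)
      then show ?thesis using j(1) by (auto intro!: image_eqI[where x="Suc j"])
    qed
  qed
  have cle: "card (sp X' Y) \<le> s + 1"
    using card_mono[OF _ sub] card_image_le[of "{..<s+1}" "\<lambda>j. c + nsum j d"] by fastforce
  have "pG TYPE('a) \<le> enat (card (sp X' Y)) \<or> card X' + card Y \<le> card (sp X' Y) + 1"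
    using CD[OF fX' fY _ neY] neX unfolding X'_def by auto
  moreover have "\<not> pG TYPE('a) \<le> enat (card (sp X' Y))"
    using cle lt unfolding s_def by (meson enat_ord_simps(1) leD order_le_less_trans)
  ultimately have "card X' + card Y \<le> s + 2" using cle by linarith
  then have c1: "card X' \<le> card X + 1" using tight unfolding s_def by linarith
  obtain y where "y \<in> Y" using neY by auto
  then have cX: "card X \<le> s" using card_le_sp[OF fX fY] unfolding s_def by blast
  have ltX: "enat (card X) < pG TYPE('a)" using cX lt unfolding s_def
    by (meson enat_ord_simps(1) le_add1 order_le_less_trans order_trans)
  show ?thesis by (rule chain'[OF fX neX d0 ltX]) (use c1 in \<open>simp add: X'_def\<close>)
qed

lemma APd_sum:
  fixes X Y :: "'a::ab_group_add set"
  assumes fX: "finite X" and fY: "finite Y" and neX: "X \<noteq> {}" and neY: "Y \<noteq> {}"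
    and apX: "APd d X" and apY: "APd d Y"
    and tight: "card (sp X Y) + 1 = card X + card Y"
  shows "APd d (sp X Y)"
proof -
  define n1 where "n1 = card X"
  define n2 where "n2 = card Y"
  obtain c1 where X0: "X = (\<lambda>j. c1 + nsum j d) ` {..<card X}" by (rule APd_obtain[OF apX])
  obtain c2 where Y0: "Y = (\<lambda>j. c2 + nsum j d) ` {..<card Y}" by (rule APd_obtain[OF apY])
  have X: "X = (\<lambda>j. c1 + nsum j d) ` {..<n1}" unfolding n1_def by (rule X0)
  have Y: "Y = (\<lambda>j. c2 + nsum j d) ` {..<n2}" unfolding n2_def by (rule Y0)
  have n1p: "n1 \<ge> 1" "n2 \<ge> 1" using neX neY fX fY unfolding n1_def n2_def
    by (simp_all add: Suc_leI card_gt_0_iff)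
  define T where "T = (\<lambda>j. (c1 + c2) + nsum j d) ` {..<n1 + n2 - 1}"
  have sub: "sp X Y \<subseteq> T"
  proof
    fix z assume "z \<in> sp X Y"
    then obtain i j where ij: "i < n1" "j < n2" "z = (c1 + nsum i d) + (c2 + nsum j d)"
      unfolding X Y by (auto simp: sp_iff)
    have "z = (c1 + c2) + nsum (i + j) d" using ij(3) by (simp add: nsum_add algebra_simps)
    moreover have "i + j < n1 + n2 - 1" using ij(1,2) by simp
    ultimately show "z \<in> T" unfolding T_def by auto
  qed
  have "card T \<le> n1 + n2 - 1" unfolding T_def using card_image_le[of "{..<n1 + n2 - 1}"] by simp
  then have "card T \<le> card (sp X Y)" using tight unfolding n1_def n2_def by simp
  then have eq: "sp X Y = T" using card_seteq[OF _ sub] unfolding T_def by simp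
  have cs: "card (sp X Y) = n1 + n2 - 1" using tight unfolding n1_def n2_def by simp
  have "sp X Y = (\<lambda>j. (c1 + c2) + nsum j d) ` {..<card (sp X Y)}" unfolding cs using eq unfolding T_def .
  then show ?thesis unfolding APd_def by blast
qed

lemma CS_int:
  fixes f :: "'b \<Rightarrow> int"
  assumes "finite S"
  shows "(\<Sum>s\<in>S. f s)^2 \<le> int (card S) * (\<Sum>s\<in>S. (f s)^2)"
proof -
  have "0 \<le> (\<Sum>s\<in>S. \<Sum>t\<in>S. (f s - f t)^2)" by (intro sum_nonneg) simp
  also have "\<dots> = (\<Sum>s\<in>S. \<Sum>t\<in>S. (f s)^2 + (f t)^2 - 2 * (f s * f t))"
    by (simp add: power2_diff mult.assoc)
  also have "\<dots> = (\<Sum>s\<in>S. \<Sum>t\<in>S. (f s)^2) + (\<Sum>s\<in>S. \<Sum>t\<in>S. (f t)^2) - 2 * (\<Sum>s\<in>S. \<Sum>t\<in>S. f s * f t)"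
    by (simp add: sum.distrib sum_subtractf sum_distrib_left)
  also have "\<dots> = 2 * (int (card S) * (\<Sum>s\<in>S. (f s)^2)) - 2 * (\<Sum>s\<in>S. f s)^2"
    by (simp add: sum_distrib_left sum_distrib_right power2_eq_square mult.commute)
  finally show ?thesis by simp
qed

lemma CS_nat:
  fixes f :: "'b \<Rightarrow> nat"
  assumes "finite S"
  shows "(\<Sum>s\<in>S. f s)^2 \<le> card S * (\<Sum>s\<in>S. (f s)^2)"
proof -
  have "(\<Sum>s\<in>S. int (f s))^2 \<le> int (card S) * (\<Sum>s\<in>S. (int (f s))^2)"
    by (rule CS_int[OF assms])
  then have "int ((\<Sum>s\<in>S. f s)^2) \<le> int (card S * (\<Sum>s\<in>S. (f s)^2))"
    by (simp add: of_nat_sum)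
  then show ?thesis by linarith
qed


lemma arith_contra:
  fixes n k e :: nat
  assumes k2: "k \<ge> 2" and ek: "e + k \<le> n"
    and ineq: "(n*k)^2 \<le> (n + k - 1) * (n*k + e*(k*k - k))"
  shows False
proof -
  define j where "j = k - 2"
  have j: "k = j + 2" using k2 unfolding j_def by simp
  define N where "N = n - k"
  have N: "n = N + k" using ek unfolding N_def by simp
  have eN: "e \<le> N" using ek unfolding N_def by simp
  have kk: "k*k - k = k * (j+1)" unfolding j by (simp add: algebra_simps)
  have s1: "n + k - 1 = N + 2*j + 3" unfolding N j by simp
  have "(n + k - 1) * (n*k + e*(k*k - k)) \<le> (n + k - 1) * (n*k + N*(k*k - k))"
    using eN by (intro mult_le_mono2 add_le_mono1 mult_le_mono1) simp_all
  also have "n*k + N*(k*k - k) = k * (N*(j+2) + j + 2)"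
    unfolding kk unfolding N j by (simp add: algebra_simps)
  also have "\<dots> = k * k * (N + 1)" unfolding j by (simp add: algebra_simps)
  finally have A0: "(n + k - 1) * (n*k + e*(k*k - k)) \<le> (n + k - 1) * (k * k * (N + 1))" .
  have A: "(n*k)^2 \<le> k * k * ((N + 2*j + 3) * (N + 1))"
  proof -
    have "(N + 2*j + 3) * (k*k*(N+1)) = k*k*((N+2*j+3)*(N+1))"
      by (simp only: mult.assoc mult.commute mult.left_commute)
    then show ?thesis using order_trans[OF ineq A0] unfolding s1 by simp
  qed
  have B: "n * n = (N + 2*j + 3) * (N + 1) + (j+1)*(j+1)"
    unfolding N j by (simp add: algebra_simps)
  have "(n*k)^2 = k * k * (n * n)" by (simp add: power2_eq_square algebra_simps)
  also have "\<dots> = k * k * ((N + 2*j + 3) * (N + 1)) + k * k * ((j+1)*(j+1))"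
    unfolding B by (simp add: algebra_simps)
  finally have C: "(n*k)^2 = k * k * ((N + 2*j + 3) * (N + 1)) + k * k * ((j+1)*(j+1))" .
  have "k * k * ((j+1)*(j+1)) > 0" using k2 by simp
  then show False using A C by linarith
qed

lemma two_le_card_pair:
  assumes "finite A" "a \<in> A" "b \<in> A" "a \<noteq> b"
  shows "2 \<le> card A"
proof -
  have "card {a, b} \<le> card A" by (rule card_mono) (use assms in auto)
  then show ?thesis using assms(4) by simp
qed

lemma bad_case:
  fixes X Y :: "'a::ab_group_add set"
  assumes fX: "finite X" and fY: "finite Y" and n2: "card X \<ge> 2" and k3: "card Y \<ge> 3"
    and tight: "card (sp X Y) + 1 = card X + card Y"
    and small: "enat (card (sp X Y)) < pG TYPE('a)"
    and bad: "\<And>e. card {y\<in>Y. y + e \<in> X} \<le> 1 \<or> card {y\<in>Y. y + e \<in> X} = card Y"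
  shows False
proof -
  define n where "n = card X"
  define k where "k = card Y"
  define S where "S = sp X Y"
  define E where "E = {e. \<forall>y\<in>Y. y + e \<in> X}"
  have fS: "finite S" unfolding S_def using sp_finite[OF fX fY] .
  have neY: "Y \<noteq> {}" using k3 by auto
  then obtain y0 where y0: "y0 \<in> Y" by auto
  have neX: "X \<noteq> {}" using n2 by auto
  have nS: "n \<le> card S" unfolding n_def S_def using card_le_sp[OF fX fY y0] .
  have Ssmall: "\<not> pG TYPE('a) \<le> enat m" if "m \<le> card S" for m
  proof -
    have "enat m \<le> enat (card S)" using that by simp
    then have "enat m < pG TYPE('a)" using small unfolding S_def by (rule order_le_less_trans)
    then show ?thesis by (simp add: not_le)
  qed
  have finE: "finite E"
  proof (rule finite_subset[of _ "(\<lambda>x. x - y0) ` X"])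
    show "E \<subseteq> (\<lambda>x. x - y0) ` X"
    proof
      fix e assume "e \<in> E"
      then have "y0 + e \<in> X" using y0 unfolding E_def by auto
      moreover have "e = (y0 + e) - y0" by simp
      ultimately show "e \<in> (\<lambda>x. x - y0) ` X" by blast
    qed
  qed (use fX in simp)
  have full: "e \<in> E" if c2: "card {y\<in>Y. y + e \<in> X} \<ge> 2" for e
  proof -
    have "card {y\<in>Y. y + e \<in> X} = card Y" using bad[of e] c2 by linarith
    then have "{y\<in>Y. y + e \<in> X} = Y" by (intro card_subset_eq[OF fY]) auto
    then show ?thesis unfolding E_def by blast
  qed
  have coin: "x - y' \<in> E \<and> y \<noteq> y'"
    if h: "x \<in> X" "x' \<in> X" "y \<in> Y" "y' \<in> Y" "x + y = x' + y'" "(x, y) \<noteq> (x', y')" for x x' y y'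
  proof -
    have yy: "y \<noteq> y'"
    proof
      assume "y = y'"
      then have "x = x'" using h(5) by simp
      then show False using h(6) \<open>y = y'\<close> by simp
    qed
    have "y' + (x - y') = x" by simp
    moreover have "y + (x - y') = x'" using h(5) by (simp add: algebra_simps)
    ultimately have "y \<in> {v\<in>Y. v + (x - y') \<in> X}" "y' \<in> {v\<in>Y. v + (x - y') \<in> X}"
      using h by auto
    then have c2: "2 \<le> card {v\<in>Y. v + (x - y') \<in> X}"
      by (intro two_le_card_pair[OF _ _ _ yy]) (use fY in auto)
    show ?thesis using full[OF c2] yy by simp
  qed
  have spEX: "sp E Y \<subseteq> X"
  proof
    fix z assume "z \<in> sp E Y"
    then obtain e y where ey: "e \<in> E" "y \<in> Y" "z = e + y" by (auto simp: sp_iff)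
    then have "y + e \<in> X" unfolding E_def by blast
    moreover have "z = y + e" using ey(3) by (simp add: add.commute)
    ultimately show "z \<in> X" by simp
  qed
  have XE: "X \<subseteq> sp E Y"
  proof (rule ccontr)
    assume "\<not> X \<subseteq> sp E Y"
    then obtain x0 where x0: "x0 \<in> X" "x0 \<notin> sp E Y" by auto
    define X0 where "X0 = X - {x0}"
    have fX0: "finite X0" unfolding X0_def using fX by simp
    have cX0: "card X0 = n - 1" unfolding X0_def n_def using x0(1) fX by simp
    have neX0: "X0 \<noteq> {}" using cX0 n2 unfolding n_def by auto
    define A1 where "A1 = (\<lambda>y. x0 + y) ` Y"
    define A2 where "A2 = sp X0 Y"
    have cA1: "card A1 = k" unfolding A1_def k_def by (rule card_image) (simp add: inj_on_def)
    have disj: "A1 \<inter> A2 = {}"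
    proof (rule ccontr)
      assume "A1 \<inter> A2 \<noteq> {}"
      then obtain z where z: "z \<in> A1" "z \<in> A2" by blast
      then obtain y where y: "y \<in> Y" "z = x0 + y" unfolding A1_def by auto
      obtain x' y' where x'y': "x' \<in> X0" "y' \<in> Y" "z = x' + y'" using z(2) unfolding A2_def by (auto simp: sp_iff)
      have "x' \<in> X" "x' \<noteq> x0" using x'y'(1) unfolding X0_def by auto
      then have "x0 - y' \<in> E" using coin[of x0 x' y y'] x0(1) y x'y' by auto
      then have "(x0 - y') + y' \<in> sp E Y" using x'y'(2) by (rule sp_I)
      then show False using x0(2) by simp
    qed
    have sub: "A1 \<union> A2 \<subseteq> S"
    proof
      fix z assume "z \<in> A1 \<union> A2"
      then show "z \<in> S"
      proof
        assume "z \<in> A1" then show ?thesis unfolding A1_def S_def using x0(1) by (auto intro: sp_I)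
      next
        assume "z \<in> A2" then show ?thesis unfolding A2_def S_def X0_def
          using sp_mono[of "X - {x0}" X Y Y] by auto
      qed
    qed
    have fA2: "finite A2" unfolding A2_def using sp_finite[OF fX0 fY] .
    have "card (A1 \<union> A2) = card A1 + card A2"
      by (rule card_Un_disjoint) (use fY fA2 disj in \<open>auto simp: A1_def\<close>)
    moreover have "card (A1 \<union> A2) \<le> card S" using card_mono[OF fS sub] .
    ultimately have c1: "k + card A2 \<le> card S" using cA1 by simp
    have "pG TYPE('a) \<le> enat (card A2) \<or> card X0 + card Y \<le> card A2 + 1"
      unfolding A2_def using CD[OF fX0 fY neX0 neY] .
    moreover have "\<not> pG TYPE('a) \<le> enat (card A2)" using Ssmall c1 by simp
    ultimately have "card X0 + k \<le> card A2 + 1" unfolding k_def by simp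
    then show False using c1 cX0 tight k3 n2 unfolding n_def k_def S_def by linarith
  qed
  have XeqE: "X = sp E Y" using XE spEX by blast
  have neE: "E \<noteq> {}" using neX XeqE by auto
  have cE: "card E \<le> n" unfolding n_def using card_le_sp[OF finE fY y0] XeqE by simp
  have Sidon: "y1 = y2"
    if h: "\<delta> \<noteq> 0" "y1 \<in> Y" "y2 \<in> Y" "y1 + \<delta> \<in> Y" "y2 + \<delta> \<in> Y" for \<delta> y1 y2
  proof (rule ccontr)
    assume ne: "y1 \<noteq> y2"
    have cl: "e + \<delta> \<in> E" if "e \<in> E" for e
    proof (rule full)
      have m1: "(y1 + \<delta>) + e \<in> X" "(y2 + \<delta>) + e \<in> X" using h(4,5) that unfolding E_def by blast+
      have q1: "y1 + (e + \<delta>) = (y1 + \<delta>) + e" and q2: "y2 + (e + \<delta>) = (y2 + \<delta>) + e"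
        by (simp_all add: algebra_simps)
      have "y1 + (e + \<delta>) \<in> X" unfolding q1 by (rule m1(1))
      moreover have "y2 + (e + \<delta>) \<in> X" unfolding q2 by (rule m1(2))
      ultimately have "y1 + (e + \<delta>) \<in> X" "y2 + (e + \<delta>) \<in> X" by blast+
      then have "y1 \<in> {v\<in>Y. v + (e + \<delta>) \<in> X}" "y2 \<in> {v\<in>Y. v + (e + \<delta>) \<in> X}"
        using h by auto
      then show "2 \<le> card {v\<in>Y. v + (e + \<delta>) \<in> X}"
        by (intro two_le_card_pair[OF _ _ _ ne]) (use fY in auto)
    qed
    obtain e0 where e0: "e0 \<in> E" using neE by auto
    have "pG TYPE('a) \<le> enat (card E)" using L2[OF finE e0 h(1) cl] .
    then show False using Ssmall[of "card E"] cE nS by simp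
  qed
  have YY: "2 * k \<le> card (sp Y Y)"
  proof -
    have "Y \<noteq> {y0}" using k3 by auto
    then obtain y1 where y1: "y1 \<in> Y" "y1 \<noteq> y0" using y0 by blast
    have "card (Y - {y0, y1}) \<ge> 1" using k3 y0 y1 fY by (simp add: card_Diff_subset)
    then have "Y - {y0, y1} \<noteq> {}"
    proof (intro notI)
      assume "card (Y - {y0, y1}) \<ge> 1" "Y - {y0, y1} = {}"
      then show False by simp
    qed
    then obtain y2 where y2: "y2 \<in> Y" "y2 \<noteq> y0" "y2 \<noteq> y1" by auto
    define T where "T a = (\<lambda>y. y + a) ` Y" for a
    have cT: "card (T a) = k" for a unfolding T_def k_def by (rule card_image) (simp add: inj_on_def)
    have fT: "finite (T a)" for a unfolding T_def using fY by simp
    have TS: "T a \<subseteq> sp Y Y" if "a \<in> Y" for a unfolding T_def using that by (auto intro: sp_I)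
    have inter: "card (T a \<inter> T b) \<le> 1" if ab: "a \<in> Y" "b \<in> Y" "a \<noteq> b" for a b
    proof -
      have "z = z'" if zz: "z \<in> T a \<inter> T b" "z' \<in> T a \<inter> T b" for z z'
      proof -
        obtain u v where uv: "u \<in> Y" "v \<in> Y" "z = u + a" "z = v + b" using zz(1) unfolding T_def by auto
        obtain u' v' where uv': "u' \<in> Y" "v' \<in> Y" "z' = u' + a" "z' = v' + b" using zz(2) unfolding T_def by auto
        have "v + (b - a) = u" using uv by (simp add: algebra_simps)
        moreover have "v' + (b - a) = u'" using uv' by (simp add: algebra_simps)
        moreover have "b - a \<noteq> 0" using ab by simp
        ultimately have "v = v'" using Sidon[of "b - a" v v'] uv uv' by simp
        then show ?thesis using uv uv' by simp
      qed
      then show ?thesis using card_le_Suc0_iff_eq[of "T a \<inter> T b"] fT by auto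
    qed
    have i01: "card (T y0 \<inter> T y1) \<le> 1" using inter y0 y1 by auto
    have i02: "card (T y0 \<inter> T y2) \<le> 1" using inter y0 y2 by auto
    have i12: "card (T y1 \<inter> T y2) \<le> 1" using inter y1 y2 by auto
    have u01: "card (T y0 \<union> T y1) + card (T y0 \<inter> T y1) = 2 * k"
      using card_Un_Int[OF fT fT, of y0 y1] cT by simp
    have "(T y0 \<union> T y1) \<inter> T y2 = (T y0 \<inter> T y2) \<union> (T y1 \<inter> T y2)" by blast
    then have "card ((T y0 \<union> T y1) \<inter> T y2) \<le> 2"
      using card_Un_le[of "T y0 \<inter> T y2" "T y1 \<inter> T y2"] i02 i12 by simp
    moreover have "card (T y0 \<union> T y1 \<union> T y2) + card ((T y0 \<union> T y1) \<inter> T y2) = card (T y0 \<union> T y1) + k"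
      using card_Un_Int[of "T y0 \<union> T y1" "T y2"] fT cT by simp
    ultimately have "3 * k \<le> card (T y0 \<union> T y1 \<union> T y2) + 3" using u01 i01 by linarith
    moreover have "card (T y0 \<union> T y1 \<union> T y2) \<le> card (sp Y Y)"
      by (rule card_mono) (use sp_finite[OF fY fY] TS y0 y1 y2 in auto)
    ultimately show ?thesis using k3 unfolding k_def by linarith
  qed
  have EYY: "card E + k \<le> n"
  proof -
    have sub: "sp E (sp Y Y) \<subseteq> S"
    proof
      fix z assume "z \<in> sp E (sp Y Y)"
      then obtain e y y' where h: "e \<in> E" "y \<in> Y" "y' \<in> Y" "z = e + (y + y')" by (auto simp: sp_iff)
      have "y + e \<in> X" using h(1,2) unfolding E_def by blast
      then have "e + y \<in> X" by (simp add: add.commute)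
      moreover have "z = (e + y) + y'" using h(4) by (simp add: add.assoc)
      ultimately show "z \<in> S" unfolding S_def using h(3) by (auto intro: sp_I)
    qed
    have fYY: "finite (sp Y Y)" using sp_finite[OF fY fY] .
    have neYY: "sp Y Y \<noteq> {}" using y0 by (auto intro: sp_I)
    have c: "card (sp E (sp Y Y)) \<le> card S" using card_mono[OF fS sub] .
    have "pG TYPE('a) \<le> enat (card (sp E (sp Y Y))) \<or> card E + card (sp Y Y) \<le> card (sp E (sp Y Y)) + 1"
      using CD[OF finE fYY neE neYY] .
    then have "card E + card (sp Y Y) \<le> card S + 1" using Ssmall[OF c] c by linarith
    then show ?thesis using YY tight unfolding n_def k_def S_def by linarith
  qed
  define P where "P = X \<times> Y"
  define Q where "Q = {(p, q). p \<in> P \<and> q \<in> P \<and> fst p + snd p = fst q + snd q}"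
  have fP: "finite P" unfolding P_def using fX fY by simp
  have cP: "card P = n * k" unfolding P_def n_def k_def by (simp add: card_cartesian_product)
  define R where "R z = {p \<in> P. fst p + snd p = z}" for z
  have fR: "finite (R z)" for z unfolding R_def using fP by simp
  have PU: "P = (\<Union>z\<in>S. R z)"
    unfolding R_def P_def S_def by (auto simp: sp_iff) blast
  have QU: "Q = (\<Union>z\<in>S. R z \<times> R z)"
    unfolding Q_def R_def P_def S_def by (auto simp: sp_iff) blast
  have cP2: "card P = (\<Sum>z\<in>S. card (R z))"
    unfolding PU by (rule card_UN_disjoint) (use fS fR in \<open>auto simp: R_def\<close>)
  have cQ: "card Q = (\<Sum>z\<in>S. (card (R z))^2)"
  proof -
    have "card Q = (\<Sum>z\<in>S. card (R z \<times> R z))"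
      unfolding QU by (rule card_UN_disjoint) (use fS fR in \<open>auto simp: R_def\<close>)
    then show ?thesis by (simp add: card_cartesian_product power2_eq_square)
  qed
  have lower: "(n * k)^2 \<le> card S * card Q"
    using CS_nat[OF fS, of "\<lambda>z. card (R z)"] cP cP2 cQ by simp
  define Off where "Off = Y \<times> Y - (\<lambda>y. (y, y)) ` Y"
  define g where "g = (\<lambda>(e, (y::'a, y'::'a)). ((y' + e, y), (y + e, y')))"
  have Qsub: "Q \<subseteq> (\<lambda>p. (p, p)) ` P \<union> g ` (E \<times> Off)"
  proof
    fix w assume "w \<in> Q"
    then obtain x y x' y' where w: "w = ((x, y), (x', y'))" "x \<in> X" "y \<in> Y" "x' \<in> X" "y' \<in> Y" "x + y = x' + y'"
      unfolding Q_def P_def by auto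
    show "w \<in> (\<lambda>p. (p, p)) ` P \<union> g ` (E \<times> Off)"
    proof (cases "(x, y) = (x', y')")
      case True then show ?thesis using w unfolding P_def by auto
    next
      case False
      then have c: "x - y' \<in> E" "y \<noteq> y'" using coin[of x x' y y'] w by auto
      have "g (x - y', (y, y')) = ((x, y), (x', y'))"
        unfolding g_def using w(6) by (simp add: algebra_simps)
      moreover have "(x - y', (y, y')) \<in> E \<times> Off" unfolding Off_def using c w by auto
      ultimately have "w \<in> g ` (E \<times> Off)" using w(1) by (intro image_eqI[of w g "(x - y', (y, y'))"]) simp_all
      then show ?thesis by (rule UnI2)
    qed
  qed
  have fOff: "finite Off" unfolding Off_def using fY by simp
  have cOff: "card Off = k * k - k"
  proof -
    have "card ((\<lambda>y. (y, y)) ` Y) = k" unfolding k_def by (rule card_image) (simp add: inj_on_def)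
    moreover have "(\<lambda>y. (y, y)) ` Y \<subseteq> Y \<times> Y" by auto
    ultimately show ?thesis unfolding Off_def k_def
      using card_Diff_subset[of "(\<lambda>y. (y, y)) ` Y" "Y \<times> Y"] fY by (simp add: card_cartesian_product)
  qed
  have upper: "card Q \<le> n * k + card E * (k * k - k)"
  proof -
    have fin: "finite ((\<lambda>p. (p, p)) ` P \<union> g ` (E \<times> Off))" using fP finE fOff by simp
    have "card Q \<le> card ((\<lambda>p. (p, p)) ` P \<union> g ` (E \<times> Off))" using card_mono[OF fin Qsub] .
    also have "\<dots> \<le> card ((\<lambda>p. (p, p)) ` P) + card (g ` (E \<times> Off))" by (rule card_Un_le)
    also have "\<dots> \<le> card P + card (E \<times> Off)" by (intro add_mono card_image_le) (use fP finE fOff in auto)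
    also have "\<dots> = n * k + card E * (k * k - k)" using cP cOff by (simp add: card_cartesian_product)
    finally show ?thesis .
  qed
  have cS: "card S = n + k - 1" using tight unfolding n_def k_def S_def by simp
  have ineq: "(n * k)^2 \<le> (n + k - 1) * (n * k + card E * (k * k - k))"
  proof -
    have "card S * card Q \<le> card S * (n * k + card E * (k * k - k))" by (rule mult_le_mono2[OF upper])
    then show ?thesis using lower unfolding cS by linarith
  qed
  have "2 \<le> k" using k3 unfolding k_def by simp
  then show False by (rule arith_contra[OF _ EYY ineq])
qed

lemma enat_lt_mono: "m \<le> n \<Longrightarrow> enat n < P \<Longrightarrow> enat m < P"
  by (meson enat_ord_simps(1) order_le_less_trans)

lemma vosper:
  fixes X Y :: "'a::ab_group_add set"
  assumes "finite X" "finite Y" "card X \<ge> 2" "card Y \<ge> 2"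
    "card (sp X Y) + 1 = card X + card Y" "enat (card (sp X Y) + 2) \<le> pG TYPE('a)"
  shows "\<exists>d. d \<noteq> 0 \<and> APd d X \<and> APd d Y"
  using assms
proof (induction "card Y" arbitrary: X Y rule: less_induct)
  case less
  note fX = less.prems(1) and fY = less.prems(2) and n2 = less.prems(3) and k2 = less.prems(4)
    and tight = less.prems(5) and pc = less.prems(6)
  have "enat (card (sp X Y)) < enat (card (sp X Y) + 2)" by simp
  then have lt: "enat (card (sp X Y)) < pG TYPE('a)" using pc by (rule order_less_le_trans)
  have "enat (card (sp X Y) + 1) < enat (card (sp X Y) + 2)" by simp
  then have lt1: "enat (card (sp X Y) + 1) < pG TYPE('a)" using pc by (rule order_less_le_trans)
  have neX: "X \<noteq> {}" using n2 by auto
  have neY: "Y \<noteq> {}" using k2 by auto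
  obtain y0 where y0: "y0 \<in> Y" using neY by auto
  have cXS: "card X \<le> card (sp X Y)" using card_le_sp[OF fX fY y0] .
  have ltX: "enat (card X) < pG TYPE('a)" using enat_lt_mono[OF cXS lt] .
  show ?case
  proof (cases "card Y = 2")
    case True
    then obtain y1 y2 where Y: "Y = {y1, y2}" "y1 \<noteq> y2" by (meson card_2_iff)
    define d where "d = y2 - y1"
    have d0: "d \<noteq> 0" using Y(2) unfolding d_def by simp
    have eq: "sp X Y = (\<lambda>z. z + y1) ` (X \<union> (\<lambda>x. x + d) ` X)"
    proof (intro equalityI subsetI)
      fix z assume "z \<in> sp X Y"
      then obtain x y where xy: "x \<in> X" "y \<in> Y" "z = x + y" by (auto simp: sp_iff)
      show "z \<in> (\<lambda>z. z + y1) ` (X \<union> (\<lambda>x. x + d) ` X)"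
      proof (cases "y = y1")
        case True then show ?thesis using xy by auto
      next
        case False
        then have "y = y2" using xy(2) Y by auto
        then have "z = (x + d) + y1" using xy(3) unfolding d_def by (simp add: algebra_simps)
        then show ?thesis using xy(1) by auto
      qed
    next
      fix z assume "z \<in> (\<lambda>z. z + y1) ` (X \<union> (\<lambda>x. x + d) ` X)"
      then obtain w where w: "w \<in> X \<union> (\<lambda>x. x + d) ` X" "z = w + y1" by auto
      show "z \<in> sp X Y"
      proof (cases "w \<in> X")
        case True then show ?thesis using w Y by (auto intro: sp_I)
      next
        case False
        then obtain x where x: "x \<in> X" "w = x + d" using w(1) by auto
        then have "z = x + y2" using w(2) unfolding d_def by (simp add: algebra_simps)
        then show ?thesis using x(1) Y by (auto intro: sp_I)
      qed
    qed
    have "card (sp X Y) = card (X \<union> (\<lambda>x. x + d) ` X)" unfolding eq by (rule card_translate)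
    then have c1: "card (X \<union> (\<lambda>x. x + d) ` X) = card X + 1" using tight True by simp
    have apX: "APd d X" by (rule chain[OF fX d0 ltX c1])
    have "(\<lambda>j. y1 + nsum j d) ` {..<2} = {y1, y2}"
    proof -
      have "{..<2::nat} = {0, 1}" by auto
      then show ?thesis unfolding d_def by (simp add: nsum_def)
    qed
    then have apY: "APd d Y" unfolding APd_def using Y True by metis
    show ?thesis using d0 apX apY by blast
  next
    case False
    then have k3: "card Y \<ge> 3" using k2 by simp
    show ?thesis
    proof (cases "\<exists>e. 2 \<le> card {y\<in>Y. y + e \<in> X} \<and> card {y\<in>Y. y + e \<in> X} < card Y")
      case True
      then obtain e where e: "2 \<le> card {y\<in>Y. y + e \<in> X}" "card {y\<in>Y. y + e \<in> X} < card Y" by blast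
      define X' where "X' = X \<union> (\<lambda>v. v + e) ` Y"
      define Y' where "Y' = {v \<in> Y. v + e \<in> X}"
      have sub: "Y' \<subseteq> Y" unfolding Y'_def by auto
      have fY': "finite Y'" using sub fY finite_subset by blast
      have fX': "finite X'" unfolding X'_def using fX fY by simp
      have int: "X \<inter> (\<lambda>v. v + e) ` Y = (\<lambda>v. v + e) ` Y'" unfolding Y'_def by auto
      have "card X' + card (X \<inter> (\<lambda>v. v + e) ` Y) = card X + card ((\<lambda>v. v + e) ` Y)"
        unfolding X'_def using card_Un_Int[of X "(\<lambda>v. v + e) ` Y"] fX fY by simp
      then have cX': "card X' + card Y' = card X + card Y" using int by (simp add: card_translate)
      have spsub: "sp X' Y' \<subseteq> sp X Y"
      proof
        fix z assume "z \<in> sp X' Y'"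
        then obtain u v where uv: "u \<in> X'" "v \<in> Y'" "z = u + v" by (auto simp: sp_iff)
        show "z \<in> sp X Y"
        proof (cases "u \<in> X")
          case True then show ?thesis using uv sub by (auto simp: sp_iff)
        next
          case False
          then obtain w where w: "w \<in> Y" "u = w + e" using uv(1) unfolding X'_def by auto
          have "z = (v + e) + w" using uv(3) w(2) by (simp add: algebra_simps)
          moreover have "v + e \<in> X" using uv(2) unfolding Y'_def by simp
          ultimately show ?thesis using w(1) by (auto simp: sp_iff)
        qed
      qed
      have fS: "finite (sp X Y)" using sp_finite[OF fX fY] .
      have cle: "card (sp X' Y') \<le> card (sp X Y)" using card_mono[OF fS spsub] .
      have neX': "X' \<noteq> {}" using neX unfolding X'_def by auto
      have neY': "Y' \<noteq> {}"
      proof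
        assume a: "Y' = {}"
        have "card Y' \<ge> 2" using e(1) unfolding Y'_def .
        then show False using a by simp
      qed
      have "pG TYPE('a) \<le> enat (card (sp X' Y')) \<or> card X' + card Y' \<le> card (sp X' Y') + 1"
        using CD[OF fX' fY' neX' neY'] .
      moreover have "\<not> pG TYPE('a) \<le> enat (card (sp X' Y'))"
      proof
        assume "pG TYPE('a) \<le> enat (card (sp X' Y'))"
        moreover have "enat (card (sp X' Y')) \<le> enat (card (sp X Y))" using cle by simp
        ultimately show False using lt by (simp add: leD order_trans)
      qed
      ultimately have "card X' + card Y' \<le> card (sp X' Y') + 1" by blast
      then have "card (sp X Y) \<le> card (sp X' Y')" using cX' tight by linarith
      then have eqS: "sp X' Y' = sp X Y" using card_seteq[OF fS spsub] by blast
      have tight': "card (sp X' Y') + 1 = card X' + card Y'" using eqS cX' tight by simp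
      have n2': "card X' \<ge> 2"
      proof -
        have "card X \<le> card X'" by (rule card_mono[OF fX']) (simp add: X'_def)
        then show ?thesis using n2 by simp
      qed
      have k2': "card Y' \<ge> 2" using e(1) unfolding Y'_def .
      have ltY: "card Y' < card Y" using e(2) unfolding Y'_def .
      have pc': "enat (card (sp X' Y') + 2) \<le> pG TYPE('a)" using pc eqS by simp
      obtain d where d: "d \<noteq> 0" "APd d X'" "APd d Y'"
        using less.hyps[OF ltY fX' fY' n2' k2' tight' pc'] by blast
      have apS': "APd d (sp X' Y')" by (rule APd_sum[OF fX' fY' neX' neY' d(2) d(3) tight'])
      then have apS: "APd d (sp X Y)" using eqS by simp
      have apX: "APd d X" by (rule lift[OF fX fY neX neY apS d(1) tight lt1])
      have apS2: "APd d (sp Y X)" using apS sp_comm by metis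
      have apY: "APd d Y"
        by (rule lift[OF fY fX neY neX apS2 d(1)]) (use tight lt1 sp_comm[of X Y] in simp_all)
      show ?thesis using d(1) apX apY by blast
    next
      case False
      have bad: "card {y\<in>Y. y + e \<in> X} \<le> 1 \<or> card {y\<in>Y. y + e \<in> X} = card Y" for e
      proof -
        have "card {y\<in>Y. y + e \<in> X} \<le> card Y" by (rule card_mono[OF fY]) auto
        moreover have "\<not> (2 \<le> card {y\<in>Y. y + e \<in> X} \<and> card {y\<in>Y. y + e \<in> X} < card Y)"
          using False by blast
        ultimately show ?thesis by linarith
      qed
      have False by (rule bad_case[OF fX fY n2 k3 tight lt bad])
      then show ?thesis ..
    qed
  qed
qed

fun SS :: "(nat \<Rightarrow> 'a::ab_group_add set) \<Rightarrow> nat \<Rightarrow> 'a set" where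
  "SS R 0 = {0}"
| "SS R (Suc j) = sp (SS R j) (R j)"

lemma SS_mem: "z \<in> SS R j \<Longrightarrow> \<exists>r. (\<forall>i<j. r i \<in> R i) \<and> z = (\<Sum>i<j. r i)"
proof (induction j arbitrary: z)
  case 0 then show ?case by simp
next
  case (Suc j)
  then obtain w v where wv: "w \<in> SS R j" "v \<in> R j" "z = w + v" by (auto simp: sp_iff)
  obtain r where r: "\<forall>i<j. r i \<in> R i" "w = (\<Sum>i<j. r i)" using Suc.IH[OF wv(1)] by blast
  define r' where "r' = r(j := v)"
  have "\<forall>i<Suc j. r' i \<in> R i" using r(1) wv(2) unfolding r'_def by (simp add: less_Suc_eq)
  moreover have "(\<Sum>i<Suc j. r' i) = (\<Sum>i<j. r i) + v"
    unfolding r'_def by simp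
  ultimately show ?case using r(2) wv(3) by metis
qed

lemma SS_finite_ne:
  assumes "\<forall>i<l. finite (R i) \<and> R i \<noteq> {}" "j \<le> l"
  shows "finite (SS R j) \<and> SS R j \<noteq> {}"
  using assms(2)
proof (induction j)
  case 0 then show ?case by simp
next
  case (Suc j)
  then have h: "finite (SS R j)" "SS R j \<noteq> {}" "finite (R j)" "R j \<noteq> {}" using assms(1) by auto
  then obtain w v where "w \<in> SS R j" "v \<in> R j" by blast
  then have "w + v \<in> SS R (Suc j)" by (simp add: sp_I)
  then show ?case using h by (auto simp: sp_finite)
qed

lemma selection:
  fixes a :: "'a::ab_group_add list"
  assumes sub: "\<forall>i<l. R i \<subseteq> set a"
    and cnt: "\<And>v. card {i. i < l \<and> v \<in> R i} \<le> rho v a"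
  shows "SS R l \<subseteq> Sigma_l l a"
proof
  fix z assume "z \<in> SS R l"
  then obtain r where r: "\<forall>i<l. r i \<in> R i" "z = (\<Sum>i<l. r i)" using SS_mem by blast
  define Av where "Av v = {i. i < l \<and> r i = v}" for v
  define Bv where "Bv v = {j. j < length a \<and> a ! j = v}" for v
  have cAB: "card (Av v) \<le> card (Bv v)" for v
  proof -
    have "Av v \<subseteq> {i. i < l \<and> v \<in> R i}" unfolding Av_def using r(1) by auto
    then have "card (Av v) \<le> card {i. i < l \<and> v \<in> R i}" by (intro card_mono) auto
    also have "\<dots> \<le> rho v a" by (rule cnt)
    finally show ?thesis unfolding Bv_def rho_def .
  qed
  have exh: "\<exists>f. f ` Av v \<subseteq> Bv v \<and> inj_on f (Av v)" for v
    by (rule card_le_inj) (use cAB in \<open>auto simp: Av_def Bv_def\<close>)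
  define h where "h v = (SOME f. f ` Av v \<subseteq> Bv v \<and> inj_on f (Av v))" for v
  have h: "h v ` Av v \<subseteq> Bv v \<and> inj_on (h v) (Av v)" for v
    unfolding h_def by (rule someI_ex[OF exh])
  define g where "g i = h (r i) i" for i
  have gB: "g i \<in> Bv (r i)" if "i < l" for i
  proof -
    have "i \<in> Av (r i)" unfolding Av_def using that by simp
    then show ?thesis unfolding g_def using h[of "r i"] by blast
  qed
  have ag: "a ! (g i) = r i" "g i < length a" if "i < l" for i
    using gB[OF that] unfolding Bv_def by auto
  have inj: "inj_on g {..<l}"
  proof (rule inj_onI)
    fix i i' assume ii: "i \<in> {..<l}" "i' \<in> {..<l}" "g i = g i'"
    have rr: "r i = r i'" using ag[of i] ag[of i'] ii by auto
    have "i \<in> Av (r i)" "i' \<in> Av (r i)" unfolding Av_def using ii rr by auto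
    moreover have "h (r i) i = h (r i) i'" using ii(3) rr unfolding g_def by simp
    ultimately show "i = i'" using h[of "r i"] by (meson inj_onD)
  qed
  define I where "I = g ` {..<l}"
  have "I \<subseteq> {..<length a}" unfolding I_def using ag by auto
  moreover have "card I = l" unfolding I_def using card_image[OF inj] by simp
  moreover have "(\<Sum>j\<in>I. a ! j) = z"
  proof -
    have "(\<Sum>j\<in>I. a ! j) = (\<Sum>i<l. a ! (g i))" unfolding I_def using sum.reindex[OF inj] by simp
    also have "\<dots> = (\<Sum>i<l. r i)" using ag by simp
    finally show ?thesis using r(2) by simp
  qed
  ultimately show "z \<in> Sigma_l l a" unfolding Sigma_l_def by blast
qed

lemma chain_tight:
  fixes Rw :: "nat \<Rightarrow> 'a::ab_group_add set"
  assumes rows: "\<forall>i<l. finite (Rw i) \<and> Rw i \<noteq> {}"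
    and up: "card (SS Rw l) + l \<le> (\<Sum>i<l. card (Rw i)) + 1"
    and small: "enat (card (SS Rw l)) < pG TYPE('a)"
  shows "\<forall>j\<le>l. card (SS Rw j) + j = (\<Sum>i<j. card (Rw i)) + 1"
proof -
  have fn: "finite (SS Rw j) \<and> SS Rw j \<noteq> {}" if "j \<le> l" for j using SS_finite_ne[OF rows that] .
  have mono1: "card (SS Rw j) \<le> card (SS Rw (Suc j))" if jl: "j < l" for j
  proof -
    obtain v where "v \<in> Rw j" using rows jl by blast
    then show ?thesis using card_le_sp[of "SS Rw j" "Rw j" v] fn[of j] rows jl by simp
  qed
  have monok: "card (SS Rw j) \<le> card (SS Rw (j + k))" if "j + k \<le> l" for j k
    using that
  proof (induction k)
    case 0 then show ?case by simp
  next
    case (Suc k)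
    then have "card (SS Rw j) \<le> card (SS Rw (j + k))" by simp
    also have "\<dots> \<le> card (SS Rw (Suc (j + k)))" using mono1[of "j + k"] Suc.prems by simp
    finally show ?case by simp
  qed
  have monol: "card (SS Rw j) \<le> card (SS Rw l)" if "j \<le> l" for j
    using monok[of j "l - j"] that by simp
  have step: "card (SS Rw j) + card (Rw j) \<le> card (SS Rw (Suc j)) + 1" if "j < l" for j
  proof -
    have h: "finite (SS Rw j)" "SS Rw j \<noteq> {}" "finite (Rw j)" "Rw j \<noteq> {}" using fn[of j] rows that by auto
    have "pG TYPE('a) \<le> enat (card (SS Rw (Suc j))) \<or> card (SS Rw j) + card (Rw j) \<le> card (SS Rw (Suc j)) + 1"
      using CD[OF h(1) h(3) h(2) h(4)] by simp
    moreover have "\<not> pG TYPE('a) \<le> enat (card (SS Rw (Suc j)))"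
    proof
      assume "pG TYPE('a) \<le> enat (card (SS Rw (Suc j)))"
      moreover have "enat (card (SS Rw (Suc j))) \<le> enat (card (SS Rw l))" using monol[of "Suc j"] that by simp
      ultimately show False using small by (simp add: leD order_trans)
    qed
    ultimately show ?thesis by blast
  qed
  define T where "T j = (\<Sum>i<j. card (Rw i))" for j
  have TS: "T (Suc j) = T j + card (Rw j)" for j unfolding T_def by simp
  define sl where "sl j = int (card (SS Rw j)) + int j - int (T j) - 1" for j
  have sl0: "sl 0 = 0" unfolding sl_def T_def by simp
  have slmono: "sl j \<le> sl (j + k)" if "j + k \<le> l" for j k
    using that
  proof (induction k)
    case 0 then show ?case by simp
  next
    case (Suc k)
    then have "sl j \<le> sl (j + k)" by simp
    also have "\<dots> \<le> sl (Suc (j + k))" using step[of "j + k"] Suc.prems TS[of "j + k"] unfolding sl_def by simp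
    finally show ?case by simp
  qed
  have sll: "sl l \<le> 0" using up unfolding sl_def T_def[symmetric] by simp
  show ?thesis
  proof (intro allI impI)
    fix j assume j: "j \<le> l"
    have "0 \<le> sl j" using slmono[of 0 j] sl0 j by simp
    moreover have "sl j \<le> sl l" using slmono[of j "l - j"] j by simp
    ultimately have "sl j = 0" using sll by simp
    then show "card (SS Rw j) + j = (\<Sum>i<j. card (Rw i)) + 1" unfolding sl_def T_def[symmetric] by simp
  qed
qed

lemma SS_card_mono:
  assumes rows: "\<forall>i<l. finite (R i) \<and> R i \<noteq> {}" and jl: "j \<le> l"
  shows "card (SS R j) \<le> card (SS R l)"
proof -
  have mono1: "card (SS R i) \<le> card (SS R (Suc i))" if il: "i < l" for i
  proof -
    obtain v where "v \<in> R i" using rows il by blast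
    then show ?thesis using card_le_sp[of "SS R i" "R i" v] SS_finite_ne[OF rows, of i] rows il by simp
  qed
  have "card (SS R j) \<le> card (SS R (j + k))" if "j + k \<le> l" for k
    using that
  proof (induction k)
    case 0 then show ?case by simp
  next
    case (Suc k)
    then have "card (SS R j) \<le> card (SS R (j + k))" by simp
    also have "\<dots> \<le> card (SS R (Suc (j + k)))" using mono1[of "j + k"] Suc.prems by simp
    finally show ?case by simp
  qed
  from this[of "l - j"] show ?thesis using jl by simp
qed

lemma SS_2: "SS R 2 = sp (R 0) (R 1)"
  by (simp add: numeral_2_eq_2 sp_zero)

lemma SS_3: "SS R 3 = sp (SS R 2) (R 2)"
  by (simp add: numeral_3_eq_3 numeral_2_eq_2)

lemma sum3: "(\<Sum>i<3::nat. f i) = f 0 + f 1 + (f 2::nat)"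
  by (simp add: numeral_3_eq_3 numeral_2_eq_2)

lemma sum2: "(\<Sum>i<2::nat. f i) = f 0 + (f 1::nat)"
  by (simp add: numeral_2_eq_2)

lemma sum_from:
  fixes f :: "nat \<Rightarrow> nat"
  assumes "\<And>i. j0 \<le> i \<Longrightarrow> i < l \<Longrightarrow> f i = 1" "j0 \<le> l"
  shows "(\<Sum>i<l. f i) = (\<Sum>i<j0. f i) + (l - j0)"
proof -
  have "(\<Sum>i<j0 + t. f i) = (\<Sum>i<j0. f i) + t" if "j0 + t \<le> l" for t
    using that
  proof (induction t)
    case 0 then show ?case by simp
  next
    case (Suc t)
    then have "(\<Sum>i<j0 + t. f i) = (\<Sum>i<j0. f i) + t" by simp
    moreover have "f (j0 + t) = 1" using assms(1) Suc.prems by simp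
    ultimately show ?case by simp
  qed
  from this[of "l - j0"] show ?thesis using assms(2) by simp
qed

lemma APd_arith:
  assumes "APd d X" "d \<noteq> 0"
  shows "arith_prog X"
proof -
  obtain c where "X = (\<lambda>j. c + nsum j d) ` {..<card X}" using APd_obtain[OF assms(1)] by blast
  then have "X = {c + nsum j d | j. j < card X}" by auto
  then show ?thesis unfolding arith_prog_def using assms(2) by blast
qed

lemma enat_plus2: "enat (k + 1) < P \<Longrightarrow> enat (k + 2) \<le> P"
  using Suc_ile_eq[of "k + 1" P] by simp

theorem theorem6p8:
  fixes a :: "'a::ab_group_add list" and l m :: nat
  assumes "2 \<le> l" and "l \<le> m" and "length a = m"
    and "if l = 2 then enat (card (Sigma_l l a)) + 1 < pG TYPE('a)
         else enat (card (Sigma_l l a)) < pG TYPE('a)"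
    and "\<exists>x\<in>set a. mu l a x = l"
    and "card {x\<in>set a. mu l a x \<ge> 2} \<ge> 2"
    and "int (card (Sigma_l l a)) = (\<Sum>x\<in>set a. int (mu l a x)) - int l + 1"
  shows "arith_prog (set a)"
proof -
  note l2 = assms(1)
  define A where "A = set a"
  define Sg where "Sg = Sigma_l l a"
  obtain x0 where x0: "x0 \<in> A" "mu l a x0 = l" using assms(5) unfolding A_def by blast
  have rho_x0: "l \<le> rho x0 a" using x0(2) unfolding mu_def by (simp add: min_def split: if_splits)
  have finA: "finite A" by (simp add: A_def)
  have rho_pos: "1 \<le> rho v a" if vA: "v \<in> A" for v
  proof -
    obtain j where "j < length a" "a ! j = v" using vA unfolding A_def by (auto simp: in_set_conv_nth)
    then have "j \<in> {i. i < length a \<and> a ! i = v}" by simp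
    moreover have "finite {i. i < length a \<and> a ! i = v}" by simp
    ultimately have "0 < card {i. i < length a \<and> a ! i = v}"
      using card_gt_0_iff by blast
    then show ?thesis unfolding rho_def by simp
  qed
  have mu_le: "mu l a v \<le> rho v a" "mu l a v \<le> l" for v by (simp_all add: mu_def)
  have mu_pos: "1 \<le> mu l a v" if "v \<in> A" for v using rho_pos[OF that] l2 unfolding mu_def by simp
  define R where "R i = {v \<in> A. i < mu l a v}" for i
  have R0: "R 0 = A" using mu_pos unfolding R_def by force
  define R1 where "R1 = R 1"
  have R1eq: "R1 = {x\<in>set a. mu l a x \<ge> 2}" unfolding R1_def R_def A_def by auto
  have cR1: "card R1 \<ge> 2" using assms(6) R1eq by simp
  have RA: "R i \<subseteq> A" for i unfolding R_def by auto
  have finR: "finite (R i)" for i using finite_subset[OF RA finA] .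
  have x0R: "x0 \<in> R i" if "i < l" for i unfolding R_def using x0 that by simp
  have rowsR: "\<forall>i<l. finite (R i) \<and> R i \<noteq> {}" using finR x0R by blast
  have R1A: "R1 \<subseteq> A" unfolding R1_def by (rule RA)
  have finR1: "finite R1" unfolding R1_def by (rule finR)
  have cntR: "card {i. i < l \<and> v \<in> R i} \<le> rho v a" for v
  proof -
    have "{i. i < l \<and> v \<in> R i} \<subseteq> {..<mu l a v}" unfolding R_def by auto
    then have "card {i. i < l \<and> v \<in> R i} \<le> card {..<mu l a v}" by (intro card_mono) auto
    then show ?thesis using mu_le(1)[of v] by simp
  qed
  have SSsub: "SS R l \<subseteq> Sg" unfolding Sg_def
    by (rule selection) (use RA cntR in \<open>auto simp: A_def\<close>)
  have finSg: "finite Sg"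
  proof -
    have "Sg \<subseteq> (\<lambda>I. \<Sum>j\<in>I. a ! j) ` Pow {..<length a}" unfolding Sg_def Sigma_l_def by auto
    then show ?thesis by (rule finite_subset) simp
  qed
  define n where "n = (\<Sum>v\<in>A. mu l a v)"
  have sumR: "(\<Sum>i<l. card (R i)) = n"
  proof -
    have "card (R i) = (\<Sum>v\<in>A. if i < mu l a v then 1 else 0)" for i
    proof -
      have "card (R i) = (\<Sum>v\<in>R i. 1)" by simp
      also have "\<dots> = (\<Sum>v\<in>A. if i < mu l a v then 1 else 0)"
        unfolding R_def using sum.inter_filter[OF finA, of "\<lambda>_. 1::nat" "\<lambda>v. i < mu l a v"] by simp
      finally show ?thesis .
    qed
    then have "(\<Sum>i<l. card (R i)) = (\<Sum>i<l. \<Sum>v\<in>A. if i < mu l a v then 1 else 0)" by simp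
    also have "\<dots> = (\<Sum>v\<in>A. \<Sum>i<l. if i < mu l a v then 1 else 0)" by (rule sum.swap)
    also have "\<dots> = (\<Sum>v\<in>A. mu l a v)"
    proof (rule sum.cong[OF refl])
      fix v assume "v \<in> A"
      have "(\<Sum>i<l. if i < mu l a v then 1 else (0::nat)) = (\<Sum>i\<in>{i\<in>{..<l}. i < mu l a v}. 1)"
        using sum.inter_filter[of "{..<l}" "\<lambda>_. 1::nat" "\<lambda>i. i < mu l a v"] by simp
      also have "{i\<in>{..<l}. i < mu l a v} = {..<mu l a v}" using mu_le(2)[of v] by auto
      finally show "(\<Sum>i<l. if i < mu l a v then 1 else (0::nat)) = mu l a v" by simp
    qed
    finally show ?thesis unfolding n_def .
  qed
  have cardSg: "card Sg + l = n + 1"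
  proof -
    have "(\<Sum>x\<in>set a. int (mu l a x)) = int n" unfolding n_def A_def by (simp add: of_nat_sum)
    then have "int (card Sg) = int n - int l + 1" using assms(7) unfolding Sg_def by simp
    then show ?thesis by linarith
  qed
  have smallSg: "enat (card Sg) < pG TYPE('a)"
  proof (cases "l = 2")
    case True
    then have "enat (card Sg) + 1 < pG TYPE('a)" using assms(4) unfolding Sg_def by simp
    moreover have "enat (card Sg) \<le> enat (card Sg) + 1" by simp
    ultimately show ?thesis by (meson order_le_less_trans)
  next
    case False
    then show ?thesis using assms(4) unfolding Sg_def by simp
  qed
  have cSSl: "card (SS R l) \<le> card Sg" using card_mono[OF finSg SSsub] .
  have smallR: "enat (card (SS R l)) < pG TYPE('a)" using enat_lt_mono[OF cSSl smallSg] .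
  have tightR: "\<forall>j\<le>l. card (SS R j) + j = (\<Sum>i<j. card (R i)) + 1"
    by (rule chain_tight[OF rowsR _ smallR]) (use cSSl cardSg sumR in simp)
  have SS2: "SS R 2 = sp A R1" unfolding SS_2 R0 R1_def ..
  have tight2: "card (sp A R1) + 1 = card A + card R1"
  proof -
    have "card (SS R 2) + 2 = (\<Sum>i<2. card (R i)) + 1" using tightR l2 by blast
    then show ?thesis unfolding sum2 SS2 R0 R1_def[symmetric] by simp
  qed
  have cA2: "card A \<ge> 2" using cR1 card_mono[OF finA R1A] by simp
  have cSS2l: "card (sp A R1) \<le> card (SS R l)" using SS_card_mono[OF rowsR l2] SS2 by simp
  have ltA1: "enat (card (sp A R1)) < pG TYPE('a)" using enat_lt_mono[OF cSS2l smallR] .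
  have neA: "A \<noteq> {}" using x0 by auto
  show ?thesis
  proof (cases "card A = 2")
    case True
    then obtain u v where uv: "A = {u, v}" "u \<noteq> v" by (meson card_2_iff)
    have eq: "{u + nsum j (v - u) | j. j < 2} = {u, v}"
    proof (intro equalityI subsetI)
      fix w assume "w \<in> {u + nsum j (v - u) | j. j < 2}"
      then obtain j where j: "j < 2" "w = u + nsum j (v - u)" by blast
      then have "j = 0 \<or> j = 1" by auto
      then show "w \<in> {u, v}" using j(2) by (auto simp: nsum_def)
    next
      fix w assume w: "w \<in> {u, v}"
      have m0: "u \<in> {u + nsum j (v - u) | j. j < 2}"
      proof -
        have "u = u + nsum 0 (v - u)" by simp
        then show ?thesis by (intro CollectI exI[of _ 0]) simp
      qed
      have m1: "v \<in> {u + nsum j (v - u) | j. j < 2}"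
      proof -
        have "v = u + nsum 1 (v - u)" by (simp add: nsum_def)
        then show ?thesis by (intro CollectI exI[of _ 1]) simp
      qed
      show "w \<in> {u + nsum j (v - u) | j. j < 2}" using w m0 m1 by blast
    qed
    have "v - u \<noteq> 0" using uv(2) by simp
    then show ?thesis unfolding arith_prog_def A_def[symmetric] uv(1)
      using eq[symmetric] by blast
  next
    case False
    then have cA3: "card A \<ge> 3" using cA2 by simp
    have ap: "\<exists>d. d \<noteq> 0 \<and> APd d A"
    proof (cases "l = 2")
      case True
      have "enat (card Sg) + 1 < pG TYPE('a)" using assms(4) True unfolding Sg_def by simp
      moreover have "card (sp A R1) \<le> card Sg" using cSS2l cSSl by simp
      ultimately have "enat (card (sp A R1) + 1) < pG TYPE('a)"
        using enat_lt_mono[of "card (sp A R1) + 1" "card Sg + 1"] by (simp add: one_enat_def)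
      then have "enat (card (sp A R1) + 2) \<le> pG TYPE('a)" by (rule enat_plus2)
      then obtain d where "d \<noteq> 0" "APd d A" "APd d R1"
        using vosper[OF finA finR1 cA2 cR1 tight2] by blast
      then show ?thesis by blast
    next
      case False
      then have l3: "l \<ge> 3" using l2 by simp
      show ?thesis
      proof (cases "card (R 2) \<ge> 2")
        case True
        have t3: "card (SS R 3) + 3 = card A + card R1 + card (R 2) + 1"
        proof -
          have "card (SS R 3) + 3 = (\<Sum>i<3. card (R i)) + 1" using tightR l3 by blast
          then show ?thesis unfolding sum3 R0 R1_def[symmetric] by simp
        qed
        have "card (SS R 3) \<le> card (SS R l)" using SS_card_mono[OF rowsR l3] .
        then have "card (sp A R1) + 1 \<le> card (SS R l)" using t3 tight2 True by linarith
        then have "enat (card (sp A R1) + 1) < pG TYPE('a)" using enat_lt_mono smallR by blast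
        then have "enat (card (sp A R1) + 2) \<le> pG TYPE('a)" by (rule enat_plus2)
        then obtain d where "d \<noteq> 0" "APd d A" "APd d R1"
          using vosper[OF finA finR1 cA2 cR1 tight2] by blast
        then show ?thesis by blast
      next
        case False
        have R2: "R 2 = {x0}"
        proof -
          have "x0 \<in> R 2" using x0R l3 by simp
          moreover have "card (R 2) \<le> 1" using False by simp
          ultimately show ?thesis using card_le_Suc0_iff_eq[OF finR[of 2]] by auto
        qed
        have Ri: "R i = {x0}" if "2 \<le> i" "i < l" for i
        proof -
          have "R i \<subseteq> R 2" unfolding R_def using that by auto
          then show ?thesis using R2 x0R[OF that(2)] by blast
        qed
        have "card (A - {x0}) = card A - 1" using x0(1) finA by simp
        then have "A - {x0} \<noteq> {}" using cA3 by (intro notI) simp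
        then obtain z where z: "z \<in> A" "z \<noteq> x0" by blast
        define Rz :: "nat \<Rightarrow> 'a set" where "Rz i = (if i = 0 then A - {z} else if i = 1 then R1 else if i = 2 then {x0, z} else {x0})" for i
        have cAz: "card (A - {z}) = card A - 1" using z(1) finA by simp
        have rowsRz: "\<forall>i<l. finite (Rz i) \<and> Rz i \<noteq> {}"
        proof (intro allI impI)
          fix i assume "i < l"
          have "A - {z} \<noteq> {}"
          proof
            assume e: "A - {z} = {}"
            have "card (A - {z}) = 0" unfolding e by simp
            then show False using cAz cA3 by simp
          qed
          moreover have "R1 \<noteq> {}" using cR1 by auto
          ultimately show "finite (Rz i) \<and> Rz i \<noteq> {}" unfolding Rz_def using finA finR1 by simp
        qed
        have RzA: "Rz i \<subseteq> A" for i unfolding Rz_def using R1A x0(1) z(1) by auto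
        have cntRz: "card {i. i < l \<and> v \<in> Rz i} \<le> rho v a" for v
        proof (cases "v = x0")
          case True
          have "card {i. i < l \<and> v \<in> Rz i} \<le> card {..<l}" by (intro card_mono) auto
          then show ?thesis using rho_x0 True by simp
        next
          case vx: False
          show ?thesis
          proof (cases "v \<in> A")
            case False
            then have e: "{i. i < l \<and> v \<in> Rz i} = {}" using RzA by blast
            show ?thesis unfolding e by simp
          next
            case vA: True
            have sub: "{i. i < l \<and> v \<in> Rz i} \<subseteq> {i::nat. i \<le> 2 \<and> (i = 0 \<longrightarrow> v \<noteq> z) \<and> (i = 1 \<longrightarrow> v \<in> R1) \<and> (i = 2 \<longrightarrow> v = z)}"
              unfolding Rz_def using vx by auto
            have c: "card {i::nat. i \<le> 2 \<and> (i = 0 \<longrightarrow> v \<noteq> z) \<and> (i = 1 \<longrightarrow> v \<in> R1) \<and> (i = 2 \<longrightarrow> v = z)} \<le> (if v \<in> R1 then 2 else 1)"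
            proof (cases "v = z")
              case True
              then have "{i::nat. i \<le> 2 \<and> (i = 0 \<longrightarrow> v \<noteq> z) \<and> (i = 1 \<longrightarrow> v \<in> R1) \<and> (i = 2 \<longrightarrow> v = z)} \<subseteq> (if v \<in> R1 then {1, 2} else {2})"
                by auto
              moreover have "card (if v \<in> R1 then {1::nat, 2} else {2}) = (if v \<in> R1 then 2 else 1)" by simp
              ultimately show ?thesis using card_mono[of "if v \<in> R1 then {1::nat, 2} else {2}"] by (simp split: if_splits)
            next
              case False
              then have "{i::nat. i \<le> 2 \<and> (i = 0 \<longrightarrow> v \<noteq> z) \<and> (i = 1 \<longrightarrow> v \<in> R1) \<and> (i = 2 \<longrightarrow> v = z)} \<subseteq> (if v \<in> R1 then {0, 1} else {0})"
                by auto
              moreover have "card (if v \<in> R1 then {0::nat, 1} else {0}) = (if v \<in> R1 then 2 else 1)" by simp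
              ultimately show ?thesis using card_mono[of "if v \<in> R1 then {0::nat, 1} else {0}"] by (simp split: if_splits)
            qed
            have "card {i. i < l \<and> v \<in> Rz i} \<le> (if v \<in> R1 then 2 else 1)"
            proof -
              have "finite {i::nat. i \<le> 2 \<and> (i = 0 \<longrightarrow> v \<noteq> z) \<and> (i = 1 \<longrightarrow> v \<in> R1) \<and> (i = 2 \<longrightarrow> v = z)}"
                by (rule finite_subset[of _ "{..2}"]) auto
              from card_mono[OF this sub] c show ?thesis by linarith
            qed
            moreover have "v \<in> R1 \<Longrightarrow> 2 \<le> rho v a" using R1eq mu_le(1)[of v] by auto
            ultimately show ?thesis using rho_pos[OF vA] by (auto split: if_splits)
          qed
        qed
        have SSzsub: "SS Rz l \<subseteq> Sg" unfolding Sg_def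
          by (rule selection) (use RzA cntRz in \<open>auto simp: A_def\<close>)
        have sumR': "(\<Sum>i<l. card (R i)) = card A + card R1 + (l - 2)"
        proof -
          have "(\<Sum>i<l. card (R i)) = (\<Sum>i<2. card (R i)) + (l - 2)"
            by (rule sum_from) (use Ri l3 in simp_all)
          then show ?thesis using R0 unfolding R1_def by (simp add: sum2)
        qed
        have sumRz: "(\<Sum>i<l. card (Rz i)) = card A - 1 + card R1 + 2 + (l - 3)"
        proof -
          have "(\<Sum>i<l. card (Rz i)) = (\<Sum>i<3. card (Rz i)) + (l - 3)"
            by (rule sum_from) (use l3 in \<open>simp_all add: Rz_def\<close>)
          then show ?thesis using cAz z(2) by (simp add: sum3 Rz_def)
        qed
        have cSSzl: "card (SS Rz l) \<le> card Sg" using card_mono[OF finSg SSzsub] .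
        have smallRz: "enat (card (SS Rz l)) < pG TYPE('a)" using enat_lt_mono[OF cSSzl smallSg] .
        have tightRz: "\<forall>j\<le>l. card (SS Rz j) + j = (\<Sum>i<j. card (Rz i)) + 1"
          by (rule chain_tight[OF rowsRz _ smallRz]) (use cSSzl cardSg sumR sumR' sumRz cA3 l3 in simp)
        have SSz2: "SS Rz 2 = sp (A - {z}) R1" unfolding SS_2 by (simp add: Rz_def)
        have tz2': "card (SS Rz 2) + 2 = (\<Sum>i<2. card (Rz i)) + 1"
        proof -
          have "(2::nat) \<le> l" using l3 by simp
          then show "card (SS Rz 2) + 2 = (\<Sum>i<2. card (Rz i)) + 1" using tightRz by blast
        qed
        have tz2: "card (SS Rz 2) + 2 = card (A - {z}) + card R1 + 1"
        proof -
          have "card (SS Rz 2) + 2 = (\<Sum>i<2. card (Rz i)) + 1" by (rule tz2')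
          then show ?thesis unfolding sum2 by (simp add: Rz_def)
        qed
        have tz3: "card (SS Rz 3) + 3 = card (A - {z}) + card R1 + 2 + 1"
        proof -
          have "card (SS Rz 3) + 3 = (\<Sum>i<3. card (Rz i)) + 1" using tightRz l3 by blast
          then show ?thesis unfolding sum3 using z(2) by (simp add: Rz_def)
        qed
        have "card (SS Rz 3) \<le> card (SS Rz l)" using SS_card_mono[OF rowsRz l3] .
        then have "card (SS Rz 2) + 1 \<le> card (SS Rz l)" using tz2 tz3 by linarith
        then have "enat (card (SS Rz 2) + 1) < pG TYPE('a)" using enat_lt_mono smallRz by blast
        then have pcz: "enat (card (sp (A - {z}) R1) + 2) \<le> pG TYPE('a)" unfolding SSz2
          by (rule enat_plus2)
        have tightz: "card (sp (A - {z}) R1) + 1 = card (A - {z}) + card R1" using tz2 SSz2 by simp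
        have cAz2: "card (A - {z}) \<ge> 2" using cAz cA3 by simp
        obtain d where d: "d \<noteq> 0" "APd d (A - {z})" "APd d R1"
          using vosper[OF _ finR1 cAz2 cR1 tightz pcz] finA by blast
        have "APd d A" by (rule propagate[OF finA finR1 neA d(3) cR1 tight2 ltA1])
        then show ?thesis using d(1) by blast
      qed
    qed
    then obtain d where "d \<noteq> 0" "APd d A" by blast
    then show ?thesis using APd_arith unfolding A_def by blast
  qed
qed

end
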